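(* Let $M$ be a complete pointed metric space which is a length space, and let $X$ be a Banach space. Then the Banach space $\mathrm{Lip}_0(M,X)$ has the Daugavet property. *)

theory Defs
  imports "HOL-Analysis.Analysis"
begin

definition curve_length :: "(real \<Rightarrow> 'a::metric_space) \<Rightarrow> real \<Rightarrow> real \<Rightarrow> ereal" where
  "curve_length g a b = Sup {ereal (\<Sum>i<n. dist (g (t (Suc i))) (g (t i))) | n t.
      t 0 = a \<and> t n = b \<and> (\<forall>i<n. t i \<le> t (Suc i))}"

definition length_space :: "'a::metric_space set \<Rightarrow> bool" where
  "length_space M \<longleftrightarrow> (\<forall>x\<in>M. \<forall>y\<in>M. ereal (dist x y) =
      Inf {curve_length g 0 1 | g. continuous_on {0..1} g \<and> g ` {0..1} \<subseteq> M \<and> g 0 = x \<and> g 1 = y})"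

definition Lip0 :: "'m::metric_space \<Rightarrow> ('m \<Rightarrow> 'x::real_normed_vector) set" where
  "Lip0 m0 = {f. f m0 = 0 \<and> (\<exists>K. \<forall>x y. dist (f x) (f y) \<le> K * dist x y)}"

definition lipnorm :: "('m::metric_space \<Rightarrow> 'x::real_normed_vector) \<Rightarrow> real" where
  "lipnorm f = Sup {dist (f x) (f y) / dist x y | x y. x \<noteq> y}"

text \<open>A (real) normed space, given as a linear space S of functions (pointwise operations) with norm N,
  has the Daugavet property if every rank-one bounded operator T f = phi f *R y
  (phi a bounded linear functional on S, y in S) satisfies ||Id + T|| = 1 + ||T||,
  where operator norms are suprema over the unit ball of S.\<close>
definition daugavet_property :: "('a \<Rightarrow> 'x::real_vector) set \<Rightarrow> (('a \<Rightarrow> 'x) \<Rightarrow> real) \<Rightarrow> bool" where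
  "daugavet_property S N \<longleftrightarrow>
    (\<forall>(\<phi>::('a \<Rightarrow> 'x) \<Rightarrow> real) y.
       (\<forall>f\<in>S. \<forall>g\<in>S. \<phi> (\<lambda>t. f t + g t) = \<phi> f + \<phi> g) \<and>
       (\<forall>f\<in>S. \<forall>c. \<phi> (\<lambda>t. c *\<^sub>R f t) = c * \<phi> f) \<and>
       (\<exists>C. \<forall>f\<in>S. \<bar>\<phi> f\<bar> \<le> C * N f) \<and> y \<in> S \<longrightarrow>
       Sup {N (\<lambda>t. f t + \<phi> f *\<^sub>R y t) | f. f \<in> S \<and> N f \<le> 1}
         = 1 + Sup {N (\<lambda>t. \<phi> f *\<^sub>R y t) | f. f \<in> S \<and> N f \<le> 1})"

end

theory Submission
  imports Defs
begin


definition lipb :: "('m::metric_space \<Rightarrow> 'x::real_normed_vector) \<Rightarrow> real \<Rightarrow> bool" where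
  "lipb f K \<longleftrightarrow> (\<forall>x y. dist (f x) (f y) \<le> K * dist x y)"

lemma lipnorm_le:
  fixes f :: "'m::metric_space \<Rightarrow> 'x::real_normed_vector"
  assumes ex: "\<exists>x y::'m. x \<noteq> y" and "lipb f K"
  shows "lipnorm f \<le> K"
  unfolding lipnorm_def
proof (rule cSup_least)
  show "{dist (f x) (f y) / dist x y |x y. x \<noteq> y} \<noteq> {}" using ex by blast
next
  fix q assume "q \<in> {dist (f x) (f y) / dist x y |x y. x \<noteq> y}"
  then obtain x y where "x \<noteq> y" "q = dist (f x) (f y) / dist x y" by blast
  then show "q \<le> K" using assms(2) unfolding lipb_def by (simp add: divide_le_eq)
qed

lemma lipnorm_bdd:
  fixes f :: "'m::metric_space \<Rightarrow> 'x::real_normed_vector"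
  assumes "lipb f K"
  shows "bdd_above {dist (f x) (f y) / dist x y |x y. x \<noteq> y}"
proof (rule bdd_aboveI)
  fix q assume "q \<in> {dist (f x) (f y) / dist x y |x y. x \<noteq> y}"
  then obtain x y where "x \<noteq> y" "q = dist (f x) (f y) / dist x y" by blast
  then show "q \<le> K" using assms unfolding lipb_def by (simp add: divide_le_eq)
qed

lemma lipnorm_bound:
  fixes f :: "'m::metric_space \<Rightarrow> 'x::real_normed_vector"
  assumes "lipb f K"
  shows "dist (f x) (f y) \<le> lipnorm f * dist x y"
proof (cases "x = y")
  case False
  have "dist (f x) (f y) / dist x y \<le> lipnorm f"
    unfolding lipnorm_def using False by (intro cSup_upper lipnorm_bdd[OF assms]) blast
  then show ?thesis using False by (simp add: divide_le_eq)
qed simp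

lemma lipb_lipnorm:
  fixes f :: "'m::metric_space \<Rightarrow> 'x::real_normed_vector"
  assumes "lipb f K" shows "lipb f (lipnorm f)"
  using lipnorm_bound[OF assms] unfolding lipb_def by blast

lemma lipnorm_nonneg:
  fixes f :: "'m::metric_space \<Rightarrow> 'x::real_normed_vector"
  assumes ex: "\<exists>x y::'m. x \<noteq> y" and "lipb f K"
  shows "0 \<le> lipnorm f"
proof -
  obtain x y :: 'm where "x \<noteq> y" using ex by blast
  have "0 \<le> dist (f x) (f y)" by simp
  also have "\<dots> \<le> lipnorm f * dist x y" by (rule lipnorm_bound[OF assms(2)])
  finally show ?thesis using \<open>x\<noteq>y\<close> by (simp add: zero_le_mult_iff)
qed

lemma lipnorm_gt:
  fixes f :: "'m::metric_space \<Rightarrow> 'x::real_normed_vector"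
  assumes ex: "\<exists>x y::'m. x \<noteq> y" and "lipb f K" and "\<theta> < lipnorm f"
  shows "\<exists>x y. x \<noteq> y \<and> \<theta> * dist x y < dist (f x) (f y)"
proof -
  have ne: "{dist (f x) (f y) / dist x y |x y. x \<noteq> y} \<noteq> {}" using ex by blast
  from assms(3) obtain q where "q \<in> {dist (f x) (f y) / dist x y |x y. x \<noteq> y}" "\<theta> < q"
    unfolding lipnorm_def using less_cSup_iff[OF ne lipnorm_bdd[OF assms(2)]] by blast
  then obtain x y where "x \<noteq> y" "\<theta> < dist (f x) (f y) / dist x y" by blast
  then show ?thesis by (auto simp: less_divide_eq)
qed



lemma clamp_diff: "\<bar>min 1 (max 0 (a::real)) - min 1 (max 0 b)\<bar> \<le> \<bar>a - b\<bar>"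
  by (auto simp: min_def max_def)

lemma rho_est:
  fixes t t' s K L :: real
  assumes "0 < s" "0 < K" "0 \<le> t'" "t' \<le> t" "0 < L"
  shows "\<bar>min 1 (max 0 (ln (L / max t s) / K)) - min 1 (max 0 (ln (L / max t' s) / K))\<bar> * (2 * t')
         \<le> 2 / K * (t - t')"
proof -
  define M where "M = max t s"
  define M' where "M' = max t' s"
  have M'pos: "0 < M'" using assms by (simp add: M'_def)
  have MM: "M' \<le> M" using assms by (simp add: M_def M'_def)
  have Mpos: "0 < M" using M'pos MM by linarith
  have diff: "M - M' \<le> t - t'" using assms by (simp add: M_def M'_def max_def)
  have t'M: "t' \<le> M'" by (simp add: M'_def)
  have "\<bar>min 1 (max 0 (ln (L / M) / K)) - min 1 (max 0 (ln (L / M') / K))\<bar>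
        \<le> \<bar>ln (L / M) / K - ln (L / M') / K\<bar>" by (rule clamp_diff)
  also have "\<dots> = \<bar>(ln (L / M) - ln (L / M')) / K\<bar>" by (simp add: diff_divide_distrib)
  also have "ln (L / M) - ln (L / M') = - ln (M / M')"
    using Mpos M'pos assms(5) by (simp add: ln_div)
  also have "\<bar>- ln (M / M') / K\<bar> = ln (M / M') / K"
    using MM M'pos assms(2) by simp
  finally have r: "\<bar>min 1 (max 0 (ln (L / M) / K)) - min 1 (max 0 (ln (L / M') / K))\<bar> \<le> ln (M / M') / K" .
  have l: "ln (M / M') \<le> M / M' - 1" using Mpos M'pos by (intro ln_le_minus_one) simp
  have "ln (M / M') / K * (2 * t') \<le> (M / M' - 1) / K * (2 * t')"
    using l assms by (intro mult_right_mono divide_right_mono) auto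
  also have "(M / M' - 1) = (M - M') / M'" using M'pos by (simp add: field_simps)
  also have "(M - M') / M' / K * (2 * t') = 2 / K * ((M - M') * (t' / M'))" by (simp add: field_simps)
  also have "\<dots> \<le> 2 / K * ((M - M') * 1)"
    using M'pos t'M MM assms by (intro mult_left_mono mult_left_mono) (auto simp: divide_le_eq)
  also have "\<dots> \<le> 2 / K * (t - t')" using diff assms by (intro mult_left_mono) auto
  finally have "ln (M / M') / K * (2 * t') \<le> 2 / K * (t - t')" .
  moreover have "\<bar>min 1 (max 0 (ln (L / M) / K)) - min 1 (max 0 (ln (L / M') / K))\<bar> * (2 * t') \<le> ln (M / M') / K * (2 * t')"
    using r assms by (intro mult_right_mono) auto
  ultimately show ?thesis unfolding M_def M'_def by linarith
qed



lemma bump_step: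
  fixes F Y :: "'m::metric_space \<Rightarrow> 'x::real_normed_vector" and u :: 'm
  assumes F: "lipb F a" and Y: "lipb Y a" and a0: "0 \<le> a" and aK: "a + 2/K \<le> 1" and K: "0<K" and s: "0<s"
    and le: "dist x' u \<le> dist x u"
    and \<rho>_def: "\<rho> = (\<lambda>x. min 1 (max 0 (ln (s*exp K / max (dist x u) s)/K)))"
    and Z_def: "Z = (\<lambda>x. F x + \<rho> x *\<^sub>R ((Y x - Y u) - (F x - F u)))"
  shows "dist (Z x) (Z x') \<le> dist x x'"
proof -
  define D where "D = (\<lambda>x. (Y x - Y u) - (F x - F u))"
  have a1: "a \<le> 1" using aK K by (smt (verit) divide_pos_pos[of 2 K])
  have id: "Z x - Z x' = ((1 - \<rho> x) *\<^sub>R (F x - F x') + \<rho> x *\<^sub>R (Y x - Y x')) + (\<rho> x - \<rho> x') *\<^sub>R D x'"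
    unfolding Z_def D_def by (simp add: algebra_simps)
  have r01: "0 \<le> \<rho> x" "\<rho> x \<le> 1" unfolding \<rho>_def by auto
  have n1: "norm ((1 - \<rho> x) *\<^sub>R (F x - F x') + \<rho> x *\<^sub>R (Y x - Y x')) \<le> a * dist x x'"
  proof -
    have "norm ((1 - \<rho> x) *\<^sub>R (F x - F x') + \<rho> x *\<^sub>R (Y x - Y x'))
       \<le> (1 - \<rho> x) * norm (F x - F x') + \<rho> x * norm (Y x - Y x')"
      using r01 norm_triangle_ineq[of "(1 - \<rho> x) *\<^sub>R (F x - F x')" "\<rho> x *\<^sub>R (Y x - Y x')"] by simp
    also have "\<dots> \<le> (1 - \<rho> x) * (a * dist x x') + \<rho> x * (a * dist x x')"
      using r01 F Y unfolding lipb_def dist_norm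
      by (intro add_mono mult_left_mono) auto
    finally show ?thesis by (simp add: algebra_simps)
  qed
  have nD: "norm (D x') \<le> 2 * dist x' u"
  proof -
    have "norm (D x') \<le> norm (Y x' - Y u) + norm (F x' - F u)" unfolding D_def by (rule norm_triangle_ineq4)
    also have "\<dots> \<le> a * dist x' u + a * dist x' u" using F Y unfolding lipb_def dist_norm by (intro add_mono) auto
    also have "\<dots> \<le> 2 * dist x' u" using a1 mult_right_mono[OF a1 zero_le_dist[of x' u]] by linarith
    finally show ?thesis .
  qed
  have n2: "norm ((\<rho> x - \<rho> x') *\<^sub>R D x') \<le> 2 / K * dist x x'"
  proof -
    have "norm ((\<rho> x - \<rho> x') *\<^sub>R D x') = \<bar>\<rho> x - \<rho> x'\<bar> * norm (D x')" by simp
    also have "\<dots> \<le> \<bar>\<rho> x - \<rho> x'\<bar> * (2 * dist x' u)" using nD by (intro mult_left_mono) auto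
    also have "\<dots> \<le> 2 / K * (dist x u - dist x' u)" unfolding \<rho>_def
      by (rule rho_est) (use s K le in auto)
    also have "\<dots> \<le> 2 / K * dist x x'" using K dist_triangle[of x u x'] by (intro mult_left_mono) (auto simp: dist_commute)
    finally show ?thesis .
  qed
  have "dist (Z x) (Z x') = norm (Z x - Z x')" by (simp add: dist_norm)
  also have "\<dots> \<le> a * dist x x' + 2 / K * dist x x'" unfolding id
    using n1 n2 norm_triangle_ineq[of "(1 - \<rho> x) *\<^sub>R (F x - F x') + \<rho> x *\<^sub>R (Y x - Y x')" "(\<rho> x - \<rho> x') *\<^sub>R D x'"] by linarith
  also have "\<dots> = (a + 2 / K) * dist x x'" by (simp add: algebra_simps)
  also have "\<dots> \<le> 1 * dist x x'" using aK by (intro mult_right_mono) auto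
  finally show ?thesis by simp
qed

lemma bump:
  fixes F Y :: "'m::metric_space \<Rightarrow> 'x::real_normed_vector" and u :: 'm
  assumes F: "lipb F a" and Y: "lipb Y a" and a0: "0 \<le> a" and aK: "a + 2/K \<le> 1" and K: "0<K" and s: "0<s"
    and \<rho>_def: "\<rho> = (\<lambda>x. min 1 (max 0 (ln (s*exp K / max (dist x u) s)/K)))"
    and Z_def: "Z = (\<lambda>x. F x + \<rho> x *\<^sub>R ((Y x - Y u) - (F x - F u)))"
  shows "lipb Z 1" and "\<And>x. dist x u \<le> s \<Longrightarrow> Z x = F u - Y u + Y x"
    and "\<And>x. s * exp K \<le> dist x u \<Longrightarrow> Z x = F x"
proof -
  show "lipb Z 1" unfolding lipb_def
  proof (intro allI)
    fix x x'
    show "dist (Z x) (Z x') \<le> 1 * dist x x'"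
    proof (cases "dist x' u \<le> dist x u")
      case True
      then show ?thesis using bump_step[OF F Y a0 aK K s True \<rho>_def Z_def] by simp
    next
      case False
      then have "dist x u \<le> dist x' u" by simp
      from bump_step[OF F Y a0 aK K s this \<rho>_def Z_def] show ?thesis by (simp add: dist_commute)
    qed
  qed
next
  fix x assume "dist x u \<le> s"
  then have "max (dist x u) s = s" by simp
  then have "\<rho> x = 1" unfolding \<rho>_def using K s by simp
  then show "Z x = F u - Y u + Y x" unfolding Z_def by (simp add: algebra_simps)
next
  fix x assume h: "s * exp K \<le> dist x u"
  have "s \<le> s * exp K" using s K by simp
  then have "max (dist x u) s = dist x u" using h by simp
  moreover have "ln (s * exp K / dist x u) \<le> 0"
  proof -
    have p: "0 < s * exp K" using s by simp
    then have "0 < dist x u" using h by linarith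
    then have "s * exp K / dist x u \<le> 1" using h by (simp add: divide_le_eq)
    then show ?thesis using p \<open>0 < dist x u\<close> by (simp add: ln_le_zero_iff)
  qed
  ultimately have "\<rho> x = 0" unfolding \<rho>_def using K by (simp add: divide_le_0_iff)
  then show "Z x = F x" unfolding Z_def by simp
qed



lemma card_near_le1:
  fixes c :: "nat \<Rightarrow> 'm::metric_space"
  assumes "\<forall>i<n. \<forall>j<n. i \<noteq> j \<longrightarrow> 2*L \<le> dist (c i) (c j)"
  shows "card {i. i<n \<and> dist x (c i) < L} \<le> 1"
proof -
  have "\<forall>i\<in>{i. i<n \<and> dist x (c i) < L}. \<forall>j\<in>{i. i<n \<and> dist x (c i) < L}. i = j"
  proof (intro ballI)
    fix i j assume i: "i \<in> {i. i<n \<and> dist x (c i) < L}" and j: "j \<in> {i. i<n \<and> dist x (c i) < L}"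
    show "i = j"
    proof (rule ccontr)
      assume ne: "i \<noteq> j"
      have "dist (c i) (c j) \<le> dist x (c i) + dist x (c j)" by (rule dist_triangle3)
      moreover have "2*L \<le> dist (c i) (c j)" using i j ne assms by auto
      ultimately show False using i j by simp
    qed
  qed
  moreover have fin: "finite {i. i<n \<and> dist x (c i) < L}" by auto
  ultimately show ?thesis using card_le_Suc0_iff_eq[OF fin] by (simp del: mem_Collect_eq)
qed

lemma disj_sum:
  fixes h :: "nat \<Rightarrow> 'm::metric_space \<Rightarrow> 'x::real_normed_vector" and c :: "nat \<Rightarrow> 'm"
  assumes lip: "\<forall>i<n. lipb (h i) B" and B: "0 \<le> B"
    and supp: "\<forall>i<n. \<forall>x. L \<le> dist x (c i) \<longrightarrow> h i x = 0"
    and sep: "\<forall>i<n. \<forall>j<n. i \<noteq> j \<longrightarrow> 2*L \<le> dist (c i) (c j)"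
  shows "lipb (\<lambda>x. \<Sum>i<n. h i x) (2*B)"
  unfolding lipb_def
proof (intro allI)
  fix x x'
  define J where "J = {i. i<n \<and> dist x (c i) < L} \<union> {i. i<n \<and> dist x' (c i) < L}"
  have cJ: "card J \<le> 2"
  proof -
    have "card J \<le> card {i. i<n \<and> dist x (c i) < L} + card {i. i<n \<and> dist x' (c i) < L}"
      unfolding J_def by (rule card_Un_le)
    also have "\<dots> \<le> 1 + 1" using card_near_le1[OF sep] by (intro add_mono)
    finally show ?thesis by simp
  qed
  have fJ: "finite J" unfolding J_def by auto
  have sub: "J \<subseteq> {..<n}" unfolding J_def by auto
  have "(\<Sum>i<n. h i x) - (\<Sum>i<n. h i x') = (\<Sum>i<n. h i x - h i x')" by (simp add: sum_subtractf)
  also have "\<dots> = (\<Sum>i\<in>J. h i x - h i x')"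
    by (rule sum.mono_neutral_right) (use sub supp in \<open>auto simp: J_def\<close>)
  finally have eq: "(\<Sum>i<n. h i x) - (\<Sum>i<n. h i x') = (\<Sum>i\<in>J. h i x - h i x')" .
  have "dist (\<Sum>i<n. h i x) (\<Sum>i<n. h i x') = norm (\<Sum>i\<in>J. h i x - h i x')" by (simp add: dist_norm eq)
  also have "\<dots> \<le> (\<Sum>i\<in>J. norm (h i x - h i x'))" by (rule norm_sum)
  also have "\<dots> \<le> (\<Sum>i\<in>J. B * dist x x')"
  proof (rule sum_mono)
    fix i assume "i \<in> J"
    then have "i < n" using sub by auto
    then show "norm (h i x - h i x') \<le> B * dist x x'" using lip unfolding lipb_def dist_norm by auto
  qed
  also have "\<dots> = real (card J) * (B * dist x x')" by simp
  also have "\<dots> \<le> 2 * (B * dist x x')" using cJ B by (intro mult_right_mono) auto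
  finally have "dist (\<Sum>i<n. h i x) (\<Sum>i<n. h i x') \<le> 2 * B * dist x x'" by simp
  then show "dist ((\<lambda>x. \<Sum>i<n. h i x) x) ((\<lambda>x. \<Sum>i<n. h i x) x') \<le> 2 * B * dist x x'" by simp
qed



lemma chain_dist:
  fixes q :: "nat \<Rightarrow> 'a::metric_space"
  shows "dist (q i) (q (i + m)) \<le> (\<Sum>k=i..<i+m. dist (q k) (q (Suc k)))"
proof (induction m)
  case 0 then show ?case by simp
next
  case (Suc m)
  have "dist (q i) (q (i + Suc m)) \<le> dist (q i) (q (i + m)) + dist (q (i+m)) (q (Suc (i + m)))"
    by (simp add: dist_triangle)
  also have "\<dots> \<le> (\<Sum>k=i..<i+m. dist (q k) (q (Suc k))) + dist (q (i+m)) (q (Suc (i + m)))"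
    using Suc by simp
  also have "\<dots> = (\<Sum>k=i..<i + Suc m. dist (q k) (q (Suc k)))" by simp
  finally show ?case .
qed

lemma chain_dist':
  fixes q :: "nat \<Rightarrow> 'a::metric_space"
  assumes "i \<le> j"
  shows "dist (q i) (q j) \<le> (\<Sum>k=i..<j. dist (q k) (q (Suc k)))"
  using chain_dist[of q i "j - i"] assms by simp

lemma chain_norm:
  fixes q :: "nat \<Rightarrow> 'a::real_normed_vector"
  shows "norm (q 0 - q N) \<le> (\<Sum>k<N. norm (q k - q (Suc k)))"
  using chain_dist'[of 0 N q] by (simp add: dist_norm atLeast0LessThan)

lemma sum_le_cover:
  fixes f :: "nat \<Rightarrow> real" and I :: "nat \<Rightarrow> nat set"
  assumes nn: "\<And>x. 0 \<le> f x" and fin: "\<And>i. finite (I i)"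
  shows "finite A \<Longrightarrow> A \<subseteq> (\<Union>i<k. I i) \<Longrightarrow> sum f A \<le> (\<Sum>i<k. sum f (I i))"
proof (induction k arbitrary: A)
  case 0 then show ?case by simp
next
  case (Suc k)
  have A: "A = (A - I k) \<union> (A \<inter> I k)" by auto
  have "sum f A = sum f (A - I k) + sum f (A \<inter> I k)"
    by (subst A, rule sum.union_disjoint) (use Suc.prems in auto)
  also have "sum f (A - I k) \<le> (\<Sum>i<k. sum f (I i))"
    by (rule Suc.IH) (use Suc.prems in \<open>auto simp: lessThan_Suc\<close>)
  also have "sum f (A \<inter> I k) \<le> sum f (I k)"
    by (rule sum_mono2) (use fin nn in auto)
  finally show ?case by simp
qed



lemma discrete_select:
  fixes p :: "nat \<Rightarrow> 'm::metric_space" and y :: "'m \<Rightarrow> 'x::real_normed_vector"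
  assumes ylip: "lipb y \<nu>" and \<nu>: "0 < \<nu>" and \<epsilon>: "0 < \<epsilon>" "\<epsilon> < 1"
    and dpos: "0 < dist (p 0) (p N)"
    and Dlt: "(\<Sum>i<N. dist (p i) (p (Suc i))) < (1+\<eta>) * dist (p 0) (p N)"
    and \<eta>: "0 \<le> \<eta>" "\<eta> \<le> \<epsilon>/4" "real n * \<eta> \<le> 1/8"
    and W: "(1 - \<epsilon>/4) * \<nu> * dist (p 0) (p N) < dist (y (p 0)) (y (p N))"
    and mesh: "\<forall>i<N. dist (p i) (p (Suc i)) < \<mu>"
    and r: "0 < r" "real n * r \<le> dist (p 0) (p N) / 8" and \<mu>: "\<mu> \<le> r/2" and \<mu>0: "0 < \<mu>"
  shows "\<exists>idx::nat\<Rightarrow>nat. (\<forall>i<n. idx i < N \<and> 0 < dist (p (idx i)) (p (Suc (idx i))) \<and>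
            (1-\<epsilon>) * \<nu> * dist (p (idx i)) (p (Suc (idx i))) \<le> dist (y (p (idx i))) (y (p (Suc (idx i)))))
         \<and> (\<forall>i<n. \<forall>j<n. i \<noteq> j \<longrightarrow> r \<le> dist (p (idx i)) (p (idx j)))"
proof -
  define d where "d = dist (p 0) (p N)"
  define dd where "dd = (\<lambda>i. dist (p i) (p (Suc i)))"
  define w where "w = (\<lambda>i. dist (y (p i)) (y (p (Suc i))))"
  define D where "D = (\<Sum>i<N. dd i)"
  define good where "good = (\<lambda>i. 0 < dd i \<and> (1-\<epsilon>) * \<nu> * dd i \<le> w i)"
  define G where "G = {i. i < N \<and> good i}"
  define B where "B = {i. i < N \<and> \<not> good i}"
  have dpos': "0 < d" using dpos d_def by simp
  have dd0: "\<And>i. 0 \<le> dd i" unfolding dd_def by simp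
  have wle: "\<And>i. w i \<le> \<nu> * dd i" using ylip unfolding lipb_def w_def dd_def by auto
  have w0: "\<And>i. 0 \<le> w i" unfolding w_def by simp
  have DltD: "D < (1+\<eta>) * d" using Dlt unfolding D_def dd_def d_def .
  have chain: "\<And>i j. i \<le> j \<Longrightarrow> dist (p i) (p j) \<le> (\<Sum>k=i..<j. dd k)"
    unfolding dd_def by (rule chain_dist')
  have dD: "d \<le> D" using chain[of 0 N] unfolding d_def D_def by (simp add: atLeast0LessThan)
  have sep: "\<And>i j. i \<le> j \<Longrightarrow> j \<le> N \<Longrightarrow> (\<Sum>k=i..<j. dd k) \<le> dist (p i) (p j) + (D - d)"
  proof -
    fix i j assume ij: "i \<le> j" "j \<le> N"
    have "d \<le> dist (p 0) (p i) + dist (p i) (p j) + dist (p j) (p N)"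
      unfolding d_def by (smt (verit) dist_triangle)
    also have "\<dots> \<le> (\<Sum>k=0..<i. dd k) + dist (p i) (p j) + (\<Sum>k=j..<N. dd k)"
      using chain[of 0 i] chain[of j N] ij by simp
    finally have 1: "d \<le> (\<Sum>k=0..<i. dd k) + dist (p i) (p j) + (\<Sum>k=j..<N. dd k)" .
    have "D = (\<Sum>k=0..<i. dd k) + (\<Sum>k=i..<j. dd k) + (\<Sum>k=j..<N. dd k)"
      unfolding D_def atLeast0LessThan[symmetric] using ij
      by (simp add: sum.atLeastLessThan_concat)
    with 1 show "(\<Sum>k=i..<j. dd k) \<le> dist (p i) (p j) + (D - d)" by linarith
  qed
  have Wsum: "(1 - \<epsilon>/4) * \<nu> * d \<le> (\<Sum>i<N. w i)"
  proof -
    have "dist (y (p 0)) (y (p N)) \<le> (\<Sum>k<N. norm ((y \<circ> p) k - (y \<circ> p) (Suc k)))"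
      using chain_norm[of "y \<circ> p" N] by (simp add: dist_norm)
    also have "\<dots> = (\<Sum>i<N. w i)" unfolding w_def by (simp add: dist_norm)
    finally show ?thesis using W unfolding d_def by linarith
  qed
  have Bbound: "(\<Sum>i\<in>B. dd i) \<le> d / 2"
  proof -
    have each: "\<And>i. i \<in> B \<Longrightarrow> \<epsilon> * \<nu> * dd i \<le> \<nu> * dd i - w i"
    proof -
      fix i assume "i \<in> B"
      then have ng: "\<not> good i" unfolding B_def by simp
      show "\<epsilon> * \<nu> * dd i \<le> \<nu> * dd i - w i"
      proof (cases "dd i = 0")
        case True
        then have "w i = 0" using wle[of i] w0[of i] by simp
        then show ?thesis using True by simp
      next
        case False
        then have "w i < (1-\<epsilon>) * \<nu> * dd i" using ng dd0[of i] unfolding good_def by auto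
        then show ?thesis by (simp add: algebra_simps)
      qed
    qed
    have "(\<Sum>i\<in>B. \<epsilon> * \<nu> * dd i) \<le> (\<Sum>i\<in>B. \<nu> * dd i - w i)" by (rule sum_mono) (rule each)
    also have "\<dots> \<le> (\<Sum>i<N. \<nu> * dd i - w i)"
      by (rule sum_mono2) (auto simp: B_def wle algebra_simps)
    also have "\<dots> = \<nu> * D - (\<Sum>i<N. w i)" unfolding D_def by (simp add: sum_subtractf sum_distrib_left)
    also have "\<dots> \<le> \<nu> * ((1+\<eta>) * d) - (1 - \<epsilon>/4) * \<nu> * d"
      using DltD \<nu> Wsum by (smt (verit) mult_left_mono)
    also have "\<dots> = \<nu> * d * (\<eta> + \<epsilon>/4)" by (simp add: algebra_simps)
    also have "\<dots> \<le> \<nu> * d * (\<epsilon>/2)" using \<eta> \<nu> dpos' by (intro mult_left_mono) auto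
    finally have "\<epsilon> * \<nu> * (\<Sum>i\<in>B. dd i) \<le> \<epsilon> * \<nu> * (d / 2)"
      by (simp add: sum_distrib_left algebra_simps)
    then show ?thesis using \<epsilon> \<nu> by (simp add: mult_le_cancel_left_pos)
  qed
  have Gbound: "d / 2 \<le> (\<Sum>i\<in>G. dd i)"
  proof -
    have "{..<N} = G \<union> B" "G \<inter> B = {}" unfolding G_def B_def by auto
    then have "D = (\<Sum>i\<in>G. dd i) + (\<Sum>i\<in>B. dd i)" unfolding D_def
      by (simp add: sum.union_disjoint G_def B_def)
    then show ?thesis using Bbound dD by linarith
  qed
  have X0: "0 \<le> 2*r + \<eta>*d + \<mu>" using r \<eta>(1) dpos' \<mu>0 by (simp add: add_nonneg_nonneg)
  define I where "I = (\<lambda>c. {i. i < N \<and> dist (p i) c < r})"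
  have Ifin: "\<And>c. finite (I c)" unfolding I_def by auto
  have Ibound: "\<And>c. (\<Sum>i\<in>I c. dd i) \<le> 2*r + \<eta>*d + \<mu>"
  proof -
    fix c
    show "(\<Sum>i\<in>I c. dd i) \<le> 2*r + \<eta>*d + \<mu>"
    proof (cases "I c = {}")
      case True then show ?thesis using X0 by simp
    next
      case False
      define lo where "lo = Min (I c)"
      define hi where "hi = Max (I c)"
      have lo: "lo \<in> I c" unfolding lo_def using False Ifin by simp
      have hi: "hi \<in> I c" unfolding hi_def using False Ifin by simp
      have sub: "I c \<subseteq> {lo..<Suc hi}" unfolding lo_def hi_def using Ifin False
        by (auto simp: less_Suc_eq_le)
      have lohi: "lo \<le> hi" using sub hi by auto
      have hiN: "hi < N" using hi unfolding I_def by simp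
      have "(\<Sum>i\<in>I c. dd i) \<le> (\<Sum>i=lo..<Suc hi. dd i)" by (rule sum_mono2) (use sub dd0 in auto)
      also have "\<dots> = (\<Sum>i=lo..<hi. dd i) + dd hi" using lohi by simp
      also have "(\<Sum>i=lo..<hi. dd i) \<le> dist (p lo) (p hi) + (D - d)" using sep lohi hiN by simp
      also have "dist (p lo) (p hi) \<le> dist (p lo) c + dist (p hi) c" using dist_triangle[of "p lo" "p hi" c] by (simp add: dist_commute)
      also have "\<dots> < 2 * r" using lo hi unfolding I_def by simp
      also have "D - d < \<eta> * d" using DltD by (simp add: algebra_simps)
      also have "dd hi < \<mu>" using mesh hiN unfolding dd_def by simp
      finally show ?thesis by simp
    qed
  qed
  have small: "real n * (2*r + \<eta>*d + \<mu>) < d / 2"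
  proof -
    have a: "real n * \<mu> \<le> real n * (r/2)" using \<mu> by (intro mult_left_mono) auto
    have b: "real n * (\<eta> * d) \<le> d / 8" using mult_right_mono[OF \<eta>(3), of d] dpos' by (simp add: mult.assoc)
    have c: "real n * r \<le> d / 8" using r(2) unfolding d_def .
    have e: "real n * (2*r + \<eta>*d + \<mu>) = 2 * (real n * r) + real n * (\<eta> * d) + real n * \<mu>"
      by (simp add: algebra_simps)
    have f: "real n * (r/2) = (real n * r) / 2" by simp
    show ?thesis using a b c e f dpos' by linarith
  qed
  have "\<forall>k\<le>n. \<exists>idx::nat\<Rightarrow>nat. (\<forall>i<k. idx i \<in> G) \<and> (\<forall>i<k. \<forall>j<k. i \<noteq> j \<longrightarrow> r \<le> dist (p (idx i)) (p (idx j)))"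
  proof (intro allI impI)
    fix k show "k \<le> n \<Longrightarrow> \<exists>idx::nat\<Rightarrow>nat. (\<forall>i<k. idx i \<in> G) \<and> (\<forall>i<k. \<forall>j<k. i \<noteq> j \<longrightarrow> r \<le> dist (p (idx i)) (p (idx j)))"
    proof (induction k)
      case 0 then show ?case by simp
    next
      case (Suc k)
      then obtain idx where idxG: "\<forall>i<k. idx i \<in> G" and idxs: "\<forall>i<k. \<forall>j<k. i \<noteq> j \<longrightarrow> r \<le> dist (p (idx i)) (p (idx j))"
        by auto
      have "\<exists>j\<in>G. \<forall>i<k. r \<le> dist (p j) (p (idx i))"
      proof (rule ccontr)
        assume "\<not> ?thesis"
        then have cov: "G \<subseteq> (\<Union>i<k. I (p (idx i)))" unfolding I_def G_def by force
        have "(\<Sum>i\<in>G. dd i) \<le> (\<Sum>i<k. (\<Sum>j\<in>I (p (idx i)). dd j))"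
          by (rule sum_le_cover[OF dd0 Ifin]) (use cov in \<open>auto simp: G_def\<close>)
        also have "\<dots> \<le> (\<Sum>i<k. 2*r + \<eta>*d + \<mu>)" by (rule sum_mono) (rule Ibound)
        also have "\<dots> = real k * (2*r + \<eta>*d + \<mu>)" by simp
        also have "\<dots> \<le> real n * (2*r + \<eta>*d + \<mu>)"
          using Suc.prems X0 by (intro mult_right_mono) auto
        finally show False using small Gbound by linarith
      qed
      then obtain j where j: "j \<in> G" "\<forall>i<k. r \<le> dist (p j) (p (idx i))" by blast
      define idx' where "idx' = idx(k := j)"
      have "\<forall>i<Suc k. idx' i \<in> G" using idxG j unfolding idx'_def by (auto simp: less_Suc_eq)
      moreover have "\<forall>i<Suc k. \<forall>j'<Suc k. i \<noteq> j' \<longrightarrow> r \<le> dist (p (idx' i)) (p (idx' j'))"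
        using idxs j unfolding idx'_def by (auto simp: less_Suc_eq dist_commute)
      ultimately show ?case by blast
    qed
  qed
  then obtain idx where idxG: "\<forall>i<n. idx i \<in> G" and idxs: "\<forall>i<n. \<forall>j<n. i \<noteq> j \<longrightarrow> r \<le> dist (p (idx i)) (p (idx j))"
    by blast
  show ?thesis
    by (rule exI[of _ idx]) (use idxG idxs in \<open>auto simp: G_def good_def dd_def w_def\<close>)
qed



lemma configs:
  fixes y :: "'m::metric_space \<Rightarrow> 'x::real_normed_vector"
  assumes LS: "length_space (UNIV::'m set)" and ex: "\<exists>x y::'m. x \<noteq> y"
    and ylip: "lipb y K0" and \<nu>: "0 < lipnorm y" and \<epsilon>: "0 < \<epsilon>" "\<epsilon> < 1" and R: "1 \<le> R"
  shows "\<exists>L>0. \<exists>u v :: nat \<Rightarrow> 'm. (\<forall>i<n. u i \<noteq> v i \<and> dist (u i) (v i) * R \<le> L \<and>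
            (1-\<epsilon>) * lipnorm y * dist (u i) (v i) \<le> dist (y (u i)) (y (v i)))
          \<and> (\<forall>i<n. \<forall>j<n. i \<noteq> j \<longrightarrow> 2*L \<le> dist (u i) (u j))"
proof -
  define \<nu> where "\<nu> = lipnorm y"
  have ylip': "lipb y \<nu>" unfolding \<nu>_def by (rule lipb_lipnorm[OF ylip])
  have \<nu>0: "0 < \<nu>" using \<nu> \<nu>_def by simp
  have "(1 - \<epsilon>/4) * \<nu> < \<nu>" using \<nu>0 \<epsilon> by simp
  then obtain a b where ab: "a \<noteq> b" "(1 - \<epsilon>/4) * \<nu> * dist a b < dist (y a) (y b)"
    using lipnorm_gt[OF ex ylip] unfolding \<nu>_def by blast
  define d where "d = dist a b"
  have d0: "0 < d" using ab d_def by simp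
  define \<eta> where "\<eta> = min (\<epsilon>/4) (1 / (8 * (real n + 1)))"
  have \<eta>0: "0 < \<eta>" unfolding \<eta>_def using \<epsilon> by simp
  have \<eta>1: "\<eta> \<le> \<epsilon>/4" unfolding \<eta>_def by simp
  have \<eta>2: "real n * \<eta> \<le> 1/8"
  proof -
    have "real n * \<eta> \<le> real n * (1 / (8 * (real n + 1)))" unfolding \<eta>_def by (intro mult_left_mono) auto
    also have "\<dots> = (real n / (real n + 1)) / 8" by simp
    also have "\<dots> \<le> 1 / 8" by (simp add: divide_le_eq)
    finally show ?thesis .
  qed
  define S where "S = {curve_length g 0 1 | g. continuous_on {0..1} g \<and> g ` {0..1} \<subseteq> (UNIV::'m set) \<and> g 0 = a \<and> g 1 = b}"
  have "ereal d = Inf S" using LS unfolding length_space_def S_def d_def by blast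
  moreover have "ereal d < ereal ((1+\<eta>) * d)" using d0 \<eta>0 by simp
  ultimately have "Inf S < ereal ((1+\<eta>) * d)" by simp
  then obtain s where "s \<in> S" "s < ereal ((1+\<eta>) * d)" by (auto simp: Inf_less_iff)
  then obtain g where g: "continuous_on {0..1} g" "g 0 = a" "g 1 = b" and glen: "curve_length g 0 1 < ereal ((1+\<eta>) * d)"
    unfolding S_def by blast
  define r where "r = d / (8 * (real n + 1))"
  have r0: "0 < r" unfolding r_def using d0 by simp
  have rn: "real n * r \<le> d / 8"
  proof -
    have "real n * r = (real n / (real n + 1)) * (d / 8)" unfolding r_def by simp
    also have "\<dots> \<le> 1 * (d / 8)" using d0 by (intro mult_right_mono) (auto simp: divide_le_eq)
    finally show ?thesis by simp
  qed
  define \<mu> where "\<mu> = r / (2 * R)"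
  have \<mu>0: "0 < \<mu>" unfolding \<mu>_def using r0 R by simp
  have \<mu>r: "\<mu> \<le> r / 2" unfolding \<mu>_def using r0 R by (simp add: divide_le_eq mult_le_cancel_left1 mult_le_cancel_right1)
  have \<mu>R: "\<mu> * R = r / 2" unfolding \<mu>_def using R by simp
  have "uniformly_continuous_on {0..1} g" by (rule compact_uniformly_continuous[OF g(1)]) simp
  then obtain \<delta> where \<delta>: "0 < \<delta>" "\<forall>x\<in>{0..1}. \<forall>x'\<in>{0..1}. dist x' x < \<delta> \<longrightarrow> dist (g x') (g x) < \<mu>"
    unfolding uniformly_continuous_on_def using \<mu>0 by blast
  obtain N0 where N0: "inverse (real (Suc N0)) < \<delta>" using reals_Archimedean[OF \<delta>(1)] by auto
  define N where "N = Suc N0"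
  define p where "p = (\<lambda>i. g (real i / real N))"
  have p0: "p 0 = a" unfolding p_def using g by simp
  have pN: "p N = b" unfolding p_def N_def using g by simp
  have mesh: "\<forall>i<N. dist (p i) (p (Suc i)) < \<mu>"
  proof (intro allI impI)
    fix i assume i: "i < N"
    have "dist (real (Suc i) / real N) (real i / real N) = 1 / real N"
      by (simp add: dist_real_def N_def diff_divide_distrib[symmetric])
    also have "\<dots> < \<delta>" using N0 by (simp add: N_def inverse_eq_divide)
    finally have "dist (g (real (Suc i) / real N)) (g (real i / real N)) < \<mu>"
      using \<delta>(2) i by (auto simp: N_def divide_le_eq)
    then show "dist (p i) (p (Suc i)) < \<mu>" unfolding p_def by (simp add: dist_commute)
  qed
  have Dlt: "(\<Sum>i<N. dist (p i) (p (Suc i))) < (1+\<eta>) * dist (p 0) (p N)"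
  proof -
    define t where "t = (\<lambda>i::nat. real i / real N)"
    have "ereal (\<Sum>i<N. dist (g (t (Suc i))) (g (t i))) \<in>
      {ereal (\<Sum>i<n. dist (g (t (Suc i))) (g (t i))) | n t. t 0 = 0 \<and> t n = 1 \<and> (\<forall>i<n. t i \<le> t (Suc i))}"
      by (rule CollectI, rule exI[of _ N], rule exI[of _ t]) (auto simp: t_def N_def divide_right_mono)
    then have "ereal (\<Sum>i<N. dist (g (t (Suc i))) (g (t i))) \<le> curve_length g 0 1"
      unfolding curve_length_def by (rule Sup_upper)
    also note glen
    finally have "(\<Sum>i<N. dist (g (t (Suc i))) (g (t i))) < (1+\<eta>) * d" by simp
    then show ?thesis unfolding p_def t_def d_def using p0 pN by (simp add: dist_commute p_def)
  qed
  have W: "(1 - \<epsilon>/4) * \<nu> * dist (p 0) (p N) < dist (y (p 0)) (y (p N))" using ab p0 pN by simp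
  obtain idx where idx: "\<forall>i<n. idx i < N \<and> 0 < dist (p (idx i)) (p (Suc (idx i))) \<and>
            (1-\<epsilon>) * \<nu> * dist (p (idx i)) (p (Suc (idx i))) \<le> dist (y (p (idx i))) (y (p (Suc (idx i))))"
     and idxs: "\<forall>i<n. \<forall>j<n. i \<noteq> j \<longrightarrow> r \<le> dist (p (idx i)) (p (idx j))"
    using discrete_select[OF ylip' \<nu>0 \<epsilon> _ Dlt \<eta>0[THEN less_imp_le] \<eta>1 \<eta>2 W mesh r0 _ \<mu>r \<mu>0]
      p0 pN d0 rn unfolding d_def by auto
  show ?thesis
  proof (intro exI conjI)
    show "0 < r / 2" using r0 by simp
    show "\<forall>i<n. p (idx i) \<noteq> p (Suc (idx i)) \<and> dist (p (idx i)) (p (Suc (idx i))) * R \<le> r / 2 \<and>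
            (1-\<epsilon>) * lipnorm y * dist (p (idx i)) (p (Suc (idx i))) \<le> dist (y (p (idx i))) (y (p (Suc (idx i))))"
    proof (intro allI impI conjI)
      fix i assume i: "i < n"
      show "p (idx i) \<noteq> p (Suc (idx i))" using idx i by auto
      have "dist (p (idx i)) (p (Suc (idx i))) < \<mu>" using mesh idx i by auto
      then have "dist (p (idx i)) (p (Suc (idx i))) * R \<le> \<mu> * R" using R by (intro mult_right_mono) auto
      then show "dist (p (idx i)) (p (Suc (idx i))) * R \<le> r / 2" using \<mu>R by simp
      show "(1-\<epsilon>) * lipnorm y * dist (p (idx i)) (p (Suc (idx i))) \<le> dist (y (p (idx i))) (y (p (Suc (idx i))))"
        using idx i unfolding \<nu>_def by auto
    qed
    show "\<forall>i<n. \<forall>j<n. i \<noteq> j \<longrightarrow> 2 * (r / 2) \<le> dist (p (idx i)) (p (idx j))" using idxs by simp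
  qed
qed



lemma lipb_scale:
  fixes f :: "'m::metric_space \<Rightarrow> 'x::real_normed_vector"
  assumes "lipb f K" shows "lipb (\<lambda>t. c *\<^sub>R f t) (\<bar>c\<bar> * K)"
  unfolding lipb_def
proof (intro allI)
  fix x y
  have "dist (c *\<^sub>R f x) (c *\<^sub>R f y) = \<bar>c\<bar> * dist (f x) (f y)"
    by (simp add: dist_norm scaleR_diff_right[symmetric])
  also have "\<dots> \<le> \<bar>c\<bar> * (K * dist x y)" using assms unfolding lipb_def by (intro mult_left_mono) auto
  finally show "dist (c *\<^sub>R f x) (c *\<^sub>R f y) \<le> \<bar>c\<bar> * K * dist x y" by (simp add: mult.assoc)
qed

lemma lipb_add:
  fixes f g :: "'m::metric_space \<Rightarrow> 'x::real_normed_vector"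
  assumes "lipb f A" "lipb g B" shows "lipb (\<lambda>t. f t + g t) (A + B)"
  unfolding lipb_def
proof (intro allI)
  fix x y
  have "dist (f x + g x) (f y + g y) \<le> dist (f x) (f y) + dist (g x) (g y)" by (rule dist_triangle_add)
  also have "\<dots> \<le> A * dist x y + B * dist x y" using assms unfolding lipb_def by (intro add_mono) auto
  finally show "dist (f x + g x) (f y + g y) \<le> (A + B) * dist x y" by (simp add: distrib_right)
qed

lemma lipb_mono: "lipb f A \<Longrightarrow> A \<le> B \<Longrightarrow> lipb f B"
  unfolding lipb_def by (meson dual_order.trans mult_right_mono zero_le_dist)

lemma lipb_shift:
  fixes f :: "'m::metric_space \<Rightarrow> 'x::real_normed_vector"
  shows "lipb (\<lambda>t. f t - c) K \<longleftrightarrow> lipb f K"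
  unfolding lipb_def by (simp add: dist_norm)

lemma lipb_shift':
  fixes f :: "'m::metric_space \<Rightarrow> 'x::real_normed_vector"
  shows "lipb (\<lambda>t. f t + c) K \<longleftrightarrow> lipb f K"
  unfolding lipb_def by (simp add: dist_norm)

lemma Lip0_iff: "f \<in> Lip0 m0 \<longleftrightarrow> f m0 = 0 \<and> (\<exists>K. lipb f K)"
  unfolding Lip0_def lipb_def by simp

lemma lipnorm_le1_lipb:
  fixes f :: "'m::metric_space \<Rightarrow> 'x::real_normed_vector"
  assumes "lipb f K" "lipnorm f \<le> B" shows "lipb f B"
  using lipb_mono[OF lipb_lipnorm[OF assms(1)] assms(2)] .

lemma lipnorm_scale:
  fixes f :: "'m::metric_space \<Rightarrow> 'x::real_normed_vector"
  assumes ex: "\<exists>x y::'m. x \<noteq> y" and "lipb f K"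
  shows "lipnorm (\<lambda>t. c *\<^sub>R f t) = \<bar>c\<bar> * lipnorm f"
proof (rule antisym)
  show "lipnorm (\<lambda>t. c *\<^sub>R f t) \<le> \<bar>c\<bar> * lipnorm f"
    by (rule lipnorm_le[OF ex lipb_scale[OF lipb_lipnorm[OF assms(2)]]])
  show "\<bar>c\<bar> * lipnorm f \<le> lipnorm (\<lambda>t. c *\<^sub>R f t)"
  proof (cases "c = 0")
    case True
    then show ?thesis using lipnorm_nonneg[OF ex, of "\<lambda>t. c *\<^sub>R f t" 0] by (simp add: lipb_def)
  next
    case False
    have l: "lipb (\<lambda>t. c *\<^sub>R f t) (\<bar>c\<bar> * K)" by (rule lipb_scale[OF assms(2)])
    have "lipb (\<lambda>t. (1/c) *\<^sub>R (c *\<^sub>R f t)) (\<bar>1/c\<bar> * lipnorm (\<lambda>t. c *\<^sub>R f t))"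
      by (rule lipb_scale[OF lipb_lipnorm[OF l]])
    then have "lipb f (\<bar>1/c\<bar> * lipnorm (\<lambda>t. c *\<^sub>R f t))" using False by simp
    then have "lipnorm f \<le> \<bar>1/c\<bar> * lipnorm (\<lambda>t. c *\<^sub>R f t)" by (rule lipnorm_le[OF ex])
    then show ?thesis using False by (simp add: field_simps abs_div_pos)
  qed
qed

lemma lipnorm_zero_const:
  fixes f :: "'m::metric_space \<Rightarrow> 'x::real_normed_vector"
  assumes "lipb f K" "lipnorm f = 0" shows "f x = f z"
  using lipnorm_bound[OF assms(1), of x z] assms(2) by simp



lemma Lip0_add: "f \<in> Lip0 m0 \<Longrightarrow> g \<in> Lip0 m0 \<Longrightarrow> (\<lambda>t. f t + g t) \<in> Lip0 m0"
  unfolding Lip0_iff using lipb_add by fastforce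

lemma Lip0_scale: "f \<in> Lip0 m0 \<Longrightarrow> (\<lambda>t. c *\<^sub>R f t) \<in> Lip0 m0"
  unfolding Lip0_iff using lipb_scale by fastforce

lemma Lip0_zero: "(\<lambda>t. 0) \<in> Lip0 m0"
  unfolding Lip0_iff lipb_def by (intro conjI exI[of _ 0]) auto

lemma phi_sum:
  fixes \<phi> :: "('m::metric_space \<Rightarrow> 'x::real_normed_vector) \<Rightarrow> real"
    and n :: nat and k :: "nat \<Rightarrow> 'm \<Rightarrow> 'x"
  assumes add: "\<forall>f\<in>Lip0 m0. \<forall>g\<in>Lip0 m0. \<phi> (\<lambda>t. f t + g t) = \<phi> f + \<phi> g"
    and hom: "\<forall>f\<in>Lip0 m0. \<forall>c. \<phi> (\<lambda>t. c *\<^sub>R f t) = c * \<phi> f"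
  shows "(\<forall>i<n. k i \<in> Lip0 m0) \<Longrightarrow> (\<lambda>x. \<Sum>i<n. k i x) \<in> Lip0 m0 \<and> \<phi> (\<lambda>x. \<Sum>i<n. k i x) = (\<Sum>i<n. \<phi> (k i))"
proof (induction n)
  case 0
  have "\<forall>c. \<phi> (\<lambda>t. c *\<^sub>R (0::'x)) = c * \<phi> (\<lambda>t. 0)" using bspec[OF hom Lip0_zero[of m0]] by simp
  then have "\<phi> (\<lambda>t. 0 *\<^sub>R (0::'x)) = 0 * \<phi> (\<lambda>t. 0)" by blast
  then show ?case using Lip0_zero by simp
next
  case (Suc n)
  then have IH: "(\<lambda>x. \<Sum>i<n. k i x) \<in> Lip0 m0" "\<phi> (\<lambda>x. \<Sum>i<n. k i x) = (\<Sum>i<n. \<phi> (k i))" by auto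
  have kn: "k n \<in> Lip0 m0" using Suc.prems by simp
  have eq: "(\<lambda>x. \<Sum>i<Suc n. k i x) = (\<lambda>x. (\<Sum>i<n. k i x) + k n x)" by simp
  show ?case unfolding eq using Lip0_add[OF IH(1) kn] add IH kn by simp
qed



lemma key:
  fixes m0 :: "'m::metric_space" and \<phi> :: "('m \<Rightarrow> 'x::real_normed_vector) \<Rightarrow> real" and y1 g :: "'m \<Rightarrow> 'x"
  assumes LS: "length_space (UNIV::'m set)" and ex: "\<exists>x y::'m. x \<noteq> y"
    and add: "\<forall>f\<in>Lip0 m0. \<forall>g\<in>Lip0 m0. \<phi> (\<lambda>t. f t + g t) = \<phi> f + \<phi> g"
    and hom: "\<forall>f\<in>Lip0 m0. \<forall>c. \<phi> (\<lambda>t. c *\<^sub>R f t) = c * \<phi> f"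
    and bnd: "\<forall>f\<in>Lip0 m0. \<bar>\<phi> f\<bar> \<le> C * lipnorm f" and C: "0 \<le> C"
    and y1: "y1 \<in> Lip0 m0" "0 < lipnorm y1" and g: "g \<in> Lip0 m0" "lipnorm g \<le> 1"
    and \<delta>: "0 < \<delta>" "\<delta> < 1" and \<epsilon>: "0 < \<epsilon>" "\<epsilon> < 1" and n: "0 < n"
  shows "\<exists>z \<in> Lip0 m0. lipnorm z \<le> 1 \<and> (1-\<delta>) * \<phi> g - 4 * C / real n \<le> \<phi> z \<and>
           (\<exists>u v. u \<noteq> v \<and> z u - z v = ((1-\<delta>) / lipnorm y1) *\<^sub>R (y1 u - y1 v) \<and>
                  (1-\<epsilon>) * lipnorm y1 * dist u v \<le> dist (y1 u) (y1 v))"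
proof -
  define \<nu> where "\<nu> = lipnorm y1"
  have \<nu>0: "0 < \<nu>" using y1 \<nu>_def by simp
  obtain Ky where Ky: "lipb y1 Ky" using y1 Lip0_iff by blast
  obtain Kg where Kg: "lipb g Kg" using g Lip0_iff by blast
  have g1: "lipb g 1" by (rule lipnorm_le1_lipb[OF Kg g(2)])
  have y1n: "lipb y1 \<nu>" unfolding \<nu>_def by (rule lipb_lipnorm[OF Ky])
  define K where "K = 2 / \<delta>"
  have K0: "0 < K" unfolding K_def using \<delta> by simp
  define F where "F = (\<lambda>t. (1-\<delta>) *\<^sub>R g t)"
  define Y where "Y = (\<lambda>t. ((1-\<delta>)/\<nu>) *\<^sub>R y1 t)"
  have Flip: "lipb F (1-\<delta>)" unfolding F_def using lipb_scale[OF g1, of "1-\<delta>"] \<delta> by simp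
  have Ylip: "lipb Y (1-\<delta>)" unfolding Y_def using lipb_scale[OF y1n, of "(1-\<delta>)/\<nu>"] \<delta> \<nu>0 by simp
  have a0: "0 \<le> 1 - \<delta>" using \<delta> by simp
  have aK: "(1 - \<delta>) + 2 / K \<le> 1" unfolding K_def using \<delta> by simp
  have R: "1 \<le> exp K" using K0 by simp
  obtain L u v where L: "0 < L"
    and uv: "\<forall>i<n. u i \<noteq> v i \<and> dist (u i) (v i) * exp K \<le> L \<and>
            (1-\<epsilon>) * lipnorm y1 * dist (u i) (v i) \<le> dist (y1 (u i)) (y1 (v i))"
    and sep: "\<forall>i<n. \<forall>j<n. i \<noteq> j \<longrightarrow> 2*L \<le> dist (u i) (u j)"
    using configs[OF LS ex Ky y1(2) \<epsilon> R, of n] by blast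
  define s where "s = L / exp K"
  have s0: "0 < s" unfolding s_def using L by simp
  have sK: "s * exp K = L" unfolding s_def by simp
  define \<rho> where "\<rho> = (\<lambda>i x. min 1 (max 0 (ln (s * exp K / max (dist x (u i)) s) / K)))"
  define Z where "Z = (\<lambda>i x. F x + \<rho> i x *\<^sub>R ((Y x - Y (u i)) - (F x - F (u i))))"
  have bZ: "\<And>i. lipb (Z i) 1"
    "\<And>i x. dist x (u i) \<le> s \<Longrightarrow> Z i x = F (u i) - Y (u i) + Y x"
    "\<And>i x. s * exp K \<le> dist x (u i) \<Longrightarrow> Z i x = F x"
    using bump[OF Flip Ylip a0 aK K0 s0, where u="u _", OF refl refl] unfolding \<rho>_def Z_def by auto
  define h where "h = (\<lambda>i x. Z i x - F x)"
  have hlip: "\<forall>i<n. lipb (h i) 2"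
  proof (intro allI impI)
    fix i
    have "lipb (\<lambda>x. Z i x + (-1) *\<^sub>R F x) (1 + \<bar>-1\<bar> * (1-\<delta>))"
      by (rule lipb_add[OF bZ(1) lipb_scale[OF Flip]])
    then have "lipb (h i) (1 + (1-\<delta>))" unfolding h_def by simp
    then show "lipb (h i) 2" by (rule lipb_mono) (use \<delta> in simp)
  qed
  have hsupp: "\<forall>i<n. \<forall>x. L \<le> dist x (u i) \<longrightarrow> h i x = 0"
    using bZ(3) sK unfolding h_def by simp
  have hsum: "lipb (\<lambda>x. \<Sum>i<n. h i x) (2*2)"
    by (rule disj_sum[OF hlip _ hsupp sep]) simp
  define k where "k = (\<lambda>i x. h i x - h i m0)"
  have kL: "\<forall>i<n. k i \<in> Lip0 m0"
    unfolding Lip0_iff k_def using hlip lipb_shift by fastforce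
  have ksL: "(\<lambda>x. \<Sum>i<n. k i x) \<in> Lip0 m0" and ksphi: "\<phi> (\<lambda>x. \<Sum>i<n. k i x) = (\<Sum>i<n. \<phi> (k i))"
    using phi_sum[OF add hom kL] by auto
  have kseq: "(\<lambda>x. \<Sum>i<n. k i x) = (\<lambda>x. (\<Sum>i<n. h i x) - (\<Sum>i<n. h i m0))"
    unfolding k_def by (simp add: sum_subtractf)
  have kslip: "lipb (\<lambda>x. \<Sum>i<n. k i x) 4" unfolding kseq using hsum lipb_shift[of "\<lambda>x. \<Sum>i<n. h i x" "\<Sum>i<n. h i m0" 4] by simp
  have "lipnorm (\<lambda>x. \<Sum>i<n. k i x) \<le> 4" by (rule lipnorm_le[OF ex kslip])
  then have "\<bar>\<phi> (\<lambda>x. \<Sum>i<n. k i x)\<bar> \<le> C * 4" using bnd ksL C by (meson mult_left_mono order_trans)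
  then have sumge: "- (4 * C) \<le> (\<Sum>i<n. \<phi> (k i))" using ksphi by simp
  have "\<exists>i<n. - (4 * C) / real n \<le> \<phi> (k i)"
  proof (rule ccontr)
    assume "\<not> ?thesis"
    then have lt: "\<forall>i<n. \<phi> (k i) < - (4 * C) / real n" by auto
    have "(\<Sum>i<n. \<phi> (k i)) < (\<Sum>i<n. - (4 * C) / real n)"
      by (rule sum_strict_mono) (use lt n in auto)
    also have "\<dots> = - (4 * C)" using n by simp
    finally show False using sumge by simp
  qed
  then obtain i where i: "i < n" "- (4 * C) / real n \<le> \<phi> (k i)" by blast
  define z where "z = (\<lambda>x. F x + k i x)"
  have FL: "F \<in> Lip0 m0" unfolding F_def by (rule Lip0_scale[OF g(1)])
  have zL: "z \<in> Lip0 m0" unfolding z_def by (rule Lip0_add[OF FL]) (use kL i in auto)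
  have zeq: "z = (\<lambda>x. Z i x - h i m0)" unfolding z_def k_def h_def by (simp add: algebra_simps)
  have "lipb z 1" unfolding zeq using bZ(1) lipb_shift[of "Z i" "h i m0" 1] by simp
  then have zn: "lipnorm z \<le> 1" by (rule lipnorm_le[OF ex])
  have "\<phi> z = \<phi> F + \<phi> (k i)" unfolding z_def using add FL kL i by simp
  also have "\<phi> F = (1-\<delta>) * \<phi> g" unfolding F_def using hom g by simp
  finally have phiz: "(1-\<delta>) * \<phi> g - 4 * C / real n \<le> \<phi> z" using i by simp
  have du: "dist (u i) (u i) \<le> s" using s0 by simp
  have dv: "dist (v i) (u i) \<le> s"
  proof -
    have "dist (u i) (v i) * exp K \<le> s * exp K" using uv i sK by simp
    then show ?thesis by (simp add: dist_commute)
  qed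
  have "z (u i) - z (v i) = Z i (u i) - Z i (v i)" unfolding zeq by simp
  also have "\<dots> = Y (u i) - Y (v i)" using bZ(2)[OF du] bZ(2)[OF dv] by simp
  also have "\<dots> = ((1-\<delta>) / lipnorm y1) *\<^sub>R (y1 (u i) - y1 (v i))" unfolding Y_def \<nu>_def
    by (simp add: scaleR_diff_right)
  finally have zuv: "z (u i) - z (v i) = ((1-\<delta>) / lipnorm y1) *\<^sub>R (y1 (u i) - y1 (v i))" .
  show ?thesis
    using zL zn phiz zuv uv i by blast
qed



lemma arith1:
  fixes \<theta> T :: real
  assumes "0 \<le> \<theta>" "\<theta> \<le> 1/2" "1 \<le> T"
  shows "T - \<theta>*(2*T+2) \<le> ((1-\<theta>)*(T-\<theta>) - \<theta>)*(1-\<theta>)"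
proof -
  have a: "(1-\<theta>)*(1-\<theta>) \<ge> 1 - 2*\<theta>" by (simp add: algebra_simps)
  have b: "0 \<le> T - \<theta>" using assms by simp
  have "(1-2*\<theta>)*(T-\<theta>) \<le> ((1-\<theta>)*(1-\<theta>))*(T-\<theta>)" using a b by (rule mult_right_mono)
  moreover have "((1-\<theta>)*(T-\<theta>) - \<theta>)*(1-\<theta>) = ((1-\<theta>)*(1-\<theta>))*(T-\<theta>) - \<theta>*(1-\<theta>)" by (simp add: algebra_simps)
  moreover have "(1-2*\<theta>)*(T-\<theta>) = T - \<theta> - 2*\<theta>*T + 2*\<theta>*\<theta>" by (simp add: algebra_simps)
  moreover have "0 \<le> \<theta>*\<theta>" by simp
  moreover have "\<theta>*(1-\<theta>) \<le> \<theta>" using assms by (simp add: algebra_simps)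
  moreover have "\<theta>*(2*T+2) = 2*\<theta>*T + 2*\<theta>" by (simp add: algebra_simps)
  ultimately show ?thesis by linarith
qed



theorem theorem1p1:
  fixes m0 :: "'m::metric_space"
  assumes "complete (UNIV :: 'm set)"
    and "length_space (UNIV :: 'm set)"
    and "\<exists>x y :: 'm. x \<noteq> y"
    and "(UNIV :: 'x::banach set) \<noteq> {0}"
  shows "daugavet_property (Lip0 m0 :: ('m \<Rightarrow> 'x) set) lipnorm"
  unfolding daugavet_property_def
proof (intro allI impI, elim conjE)
  fix \<phi> :: "('m \<Rightarrow> 'x) \<Rightarrow> real" and y :: "'m \<Rightarrow> 'x"
  assume add: "\<forall>f\<in>Lip0 m0. \<forall>g\<in>Lip0 m0. \<phi> (\<lambda>t. f t + g t) = \<phi> f + \<phi> g"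
    and hom: "\<forall>f\<in>Lip0 m0. \<forall>c. \<phi> (\<lambda>t. c *\<^sub>R f t) = c * \<phi> f"
    and "\<exists>C. \<forall>f\<in>Lip0 m0. \<bar>\<phi> f\<bar> \<le> C * lipnorm f" and yS: "y \<in> Lip0 m0"
  then obtain C0 where C0: "\<forall>f\<in>Lip0 m0. \<bar>\<phi> f\<bar> \<le> C0 * lipnorm f" by blast
  have ex: "\<exists>x y :: 'm. x \<noteq> y" by (rule assms(3))
  have LS: "length_space (UNIV :: 'm set)" by (rule assms(2))
  define C where "C = max C0 0"
  have C: "0 \<le> C" unfolding C_def by simp
  have lipS: "\<And>f. f \<in> Lip0 m0 \<Longrightarrow> lipb f (lipnorm f)"
    using Lip0_iff lipb_lipnorm by metis
  have nnS: "\<And>f. f \<in> Lip0 m0 \<Longrightarrow> 0 \<le> lipnorm f"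
    using Lip0_iff lipnorm_nonneg[OF ex] by metis
  have bnd: "\<forall>f\<in>Lip0 m0. \<bar>\<phi> f\<bar> \<le> C * lipnorm f"
  proof
    fix f :: "'m \<Rightarrow> 'x" assume f: "f \<in> Lip0 m0"
    have "C0 * lipnorm f \<le> C * lipnorm f" unfolding C_def using nnS[OF f] by (intro mult_right_mono) auto
    then show "\<bar>\<phi> f\<bar> \<le> C * lipnorm f" using C0 f by force
  qed
  define \<nu> where "\<nu> = lipnorm y"
  have \<nu>0: "0 \<le> \<nu>" unfolding \<nu>_def by (rule nnS[OF yS])
  have scl: "\<And>f. f \<in> Lip0 m0 \<Longrightarrow> lipnorm (\<lambda>t. \<phi> f *\<^sub>R y t) = \<bar>\<phi> f\<bar> * \<nu>"
    unfolding \<nu>_def using lipnorm_scale[OF ex lipS[OF yS]] by blast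
  have sumle: "\<And>f. f \<in> Lip0 m0 \<Longrightarrow> lipnorm (\<lambda>t. f t + \<phi> f *\<^sub>R y t) \<le> lipnorm f + \<bar>\<phi> f\<bar> * \<nu>"
    unfolding \<nu>_def by (rule lipnorm_le[OF ex lipb_add[OF lipS lipb_scale[OF lipS[OF yS]]]])
  define A where "A = {lipnorm (\<lambda>t. f t + \<phi> f *\<^sub>R y t) | f. f \<in> Lip0 m0 \<and> lipnorm f \<le> 1}"
  define B where "B = {lipnorm (\<lambda>t. \<phi> f *\<^sub>R y t) | f. f \<in> Lip0 m0 \<and> lipnorm f \<le> 1}"
  have z0: "(\<lambda>t. 0) \<in> Lip0 m0" by (rule Lip0_zero)
  have l00: "lipb (\<lambda>t::'m. 0::'x) 0" by (simp add: lipb_def)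
  have n00: "lipnorm (\<lambda>t::'m. 0::'x) \<le> 0" by (rule lipnorm_le[OF ex l00])
  then have n0: "lipnorm (\<lambda>t::'m. 0::'x) \<le> 1" by simp
  have Bne: "B \<noteq> {}" unfolding B_def using z0 n0 by blast
  have Ane: "A \<noteq> {}" unfolding A_def using z0 n0 by blast
  have Bub: "\<And>b. b \<in> B \<Longrightarrow> b \<le> C * \<nu>"
  proof -
    fix b assume "b \<in> B"
    then obtain f where f: "f \<in> Lip0 m0" "lipnorm f \<le> 1" "b = \<bar>\<phi> f\<bar> * \<nu>" unfolding B_def using scl by auto
    have "\<bar>\<phi> f\<bar> \<le> C" using bnd f C by (meson mult_left_le order_trans)
    then show "b \<le> C * \<nu>" using f \<nu>0 by (simp add: mult_right_mono)
  qed
  have Bbdd: "bdd_above B" using Bub by (rule bdd_aboveI)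
  have Aub: "\<And>a. a \<in> A \<Longrightarrow> a \<le> 1 + Sup B"
  proof -
    fix a assume "a \<in> A"
    then obtain f where f: "f \<in> Lip0 m0" "lipnorm f \<le> 1" "a = lipnorm (\<lambda>t. f t + \<phi> f *\<^sub>R y t)" unfolding A_def by auto
    have "\<bar>\<phi> f\<bar> * \<nu> \<in> B" unfolding B_def using f scl by force
    then have "\<bar>\<phi> f\<bar> * \<nu> \<le> Sup B" using Bbdd by (rule cSup_upper)
    then show "a \<le> 1 + Sup B" using sumle[OF f(1)] f by linarith
  qed
  have Abdd: "bdd_above A" using Aub by (rule bdd_aboveI)
  have up: "Sup A \<le> 1 + Sup B" using Ane Aub by (rule cSup_least)
  have low: "1 + Sup B \<le> Sup A"
  proof (rule field_le_epsilon)
    fix e :: real assume e: "0 < e"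
    define \<theta> where "\<theta> = min (1/2) (e / (2 * (1 + Sup B) + 2))"
    have SB0: "0 \<le> Sup B"
    proof -
      have "\<bar>\<phi> (\<lambda>t. 0)\<bar> * \<nu> \<in> B" unfolding B_def using z0 n0 scl[OF z0] by force
      then have "\<bar>\<phi> (\<lambda>t. 0)\<bar> * \<nu> \<le> Sup B" using Bbdd by (rule cSup_upper)
      moreover have "0 \<le> \<bar>\<phi> (\<lambda>t. 0)\<bar> * \<nu>" using \<nu>0 by simp
      ultimately show ?thesis by linarith
    qed
    define T where "T = 1 + Sup B"
    have T1: "1 \<le> T" unfolding T_def using SB0 by simp
    have \<theta>0: "0 < \<theta>" unfolding \<theta>_def using e SB0 by simp
    have \<theta>h: "\<theta> \<le> 1/2" unfolding \<theta>_def by (rule min.cobounded1)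
    have \<theta>e: "\<theta> * (2*T+2) \<le> e"
    proof -
      have p: "0 < 2 * (1 + Sup B) + 2" using SB0 by simp
      have "\<theta> * (2*T+2) \<le> (e / (2 * (1 + Sup B) + 2)) * (2*T+2)"
        unfolding \<theta>_def T_def using p by (intro mult_right_mono) auto
      also have "\<dots> = e" unfolding T_def using p by simp
      finally show ?thesis .
    qed
    have \<theta>1: "\<theta> < 1" using \<theta>h by simp
    have "\<exists>a\<in>A. T - e \<le> a"
    proof (cases "\<nu> = 0")
      case True
      have ym0: "y m0 = 0" using yS Lip0_iff by blast
      have y0: "\<And>t. y t = 0"
        using lipnorm_zero_const[OF lipS[OF yS], of _ m0] True ym0 unfolding \<nu>_def by simp
      have "Sup B \<le> 0"
      proof (rule cSup_least[OF Bne])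
        fix b assume "b \<in> B"
        then show "b \<le> 0" unfolding B_def using scl True by auto
      qed
      then have T1': "T = 1" unfolding T_def using SB0 by simp
      obtain e0 :: 'x where e0: "e0 \<noteq> 0" using assms(4) by auto
      define y0 where "y0 = (\<lambda>x::'m. dist x m0 *\<^sub>R e0)"
      have y0lip: "lipb y0 (norm e0)" unfolding lipb_def
      proof (intro allI)
        fix x x' :: 'm
        have "dist (y0 x) (y0 x') = \<bar>dist x m0 - dist x' m0\<bar> * norm e0"
          unfolding y0_def dist_norm by (simp add: scaleR_diff_left[symmetric])
        also have "\<bar>dist x m0 - dist x' m0\<bar> \<le> dist x x'"
          using dist_triangle[of x m0 x'] dist_triangle[of x' m0 x] by (simp add: dist_commute abs_le_iff)
        then have "\<bar>dist x m0 - dist x' m0\<bar> * norm e0 \<le> dist x x' * norm e0" by (rule mult_right_mono) simp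
        finally show "dist (y0 x) (y0 x') \<le> norm e0 * dist x x'" by (simp add: mult.commute)
      qed
      have y0S: "y0 \<in> Lip0 m0" unfolding Lip0_iff using y0lip by (auto simp: y0_def)
      obtain x1 :: 'm where x1: "x1 \<noteq> m0" using ex by metis
      have "0 < dist (y0 x1) (y0 m0)" using x1 e0 by (simp add: y0_def)
      also have "\<dots> \<le> lipnorm y0 * dist x1 m0" by (rule lipnorm_bound[OF y0lip])
      finally have y0pos: "0 < lipnorm y0" using x1 by (simp add: zero_less_mult_iff)
      have gz: "lipnorm (\<lambda>t::'m. 0::'x) \<le> 1" by (rule n0)
      obtain z where zS: "z \<in> Lip0 m0" and zN: "lipnorm z \<le> 1"
        and pr: "\<exists>u v. u \<noteq> v \<and> z u - z v = ((1-\<theta>) / lipnorm y0) *\<^sub>R (y0 u - y0 v) \<and>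
                  (1-\<theta>) * lipnorm y0 * dist u v \<le> dist (y0 u) (y0 v)"
        using key[OF LS ex add hom bnd C y0S y0pos z0 gz \<theta>0 \<theta>1 \<theta>0 \<theta>1, of 1] by auto
      then obtain u v where uv: "u \<noteq> v" "z u - z v = ((1-\<theta>) / lipnorm y0) *\<^sub>R (y0 u - y0 v)"
        "(1-\<theta>) * lipnorm y0 * dist u v \<le> dist (y0 u) (y0 v)" by blast
      have duv: "0 < dist u v" using uv by simp
      have "(1-\<theta>) * (1-\<theta>) * dist u v = ((1-\<theta>) / lipnorm y0) * ((1-\<theta>) * lipnorm y0 * dist u v)"
        using y0pos by simp
      also have "\<dots> \<le> ((1-\<theta>) / lipnorm y0) * dist (y0 u) (y0 v)"
        using uv(3) \<theta>1 y0pos by (intro mult_left_mono) auto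
      also have "\<dots> = dist (z u) (z v)" using uv(2) \<theta>1 y0pos by (simp add: dist_norm)
      also have "\<dots> \<le> lipnorm z * dist u v" by (rule lipnorm_bound[OF lipS[OF zS]])
      finally have "(1-\<theta>) * (1-\<theta>) \<le> lipnorm z" using duv by simp
      moreover have "lipnorm z \<in> A"
      proof -
        have "(\<lambda>t. z t + \<phi> z *\<^sub>R y t) = z" using y0 by simp
        then show ?thesis unfolding A_def using zS zN by force
      qed
      moreover have "T - e \<le> (1-\<theta>) * (1-\<theta>)"
        using \<theta>e T1' by (simp add: algebra_simps) (smt (verit) \<theta>0 mult_nonneg_nonneg)
      ultimately show ?thesis by (meson order.trans)
    next
      case False
      then have \<nu>pos: "0 < \<nu>" using \<nu>0 by simp
      have "Sup B - \<theta> < Sup B" using \<theta>0 by simp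
      then obtain b where "b \<in> B" "Sup B - \<theta> < b" using less_cSup_iff[OF Bne Bbdd] by blast
      then obtain f0 where f0: "f0 \<in> Lip0 m0" "lipnorm f0 \<le> 1" "Sup B - \<theta> < \<bar>\<phi> f0\<bar> * \<nu>"
        unfolding B_def using scl by auto
      obtain g where gS: "g \<in> Lip0 m0" and gN: "lipnorm g \<le> 1" and gphi: "\<phi> g = \<bar>\<phi> f0\<bar>"
      proof (cases "0 \<le> \<phi> f0")
        case True then show ?thesis using that f0 by simp
      next
        case False
        have "(\<lambda>t. (-1) *\<^sub>R f0 t) \<in> Lip0 m0" by (rule Lip0_scale[OF f0(1)])
        moreover have "lipnorm (\<lambda>t. (-1) *\<^sub>R f0 t) \<le> 1"
          using lipnorm_scale[OF ex lipS[OF f0(1)], of "-1"] f0 by simp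
        moreover have "\<phi> (\<lambda>t. (-1) *\<^sub>R f0 t) = \<bar>\<phi> f0\<bar>"
        proof -
          have "\<phi> (\<lambda>t. (-1) *\<^sub>R f0 t) = (-1) * \<phi> f0" using bspec[OF hom f0(1)] by blast
          then show ?thesis using False by simp
        qed
        ultimately show ?thesis using that by blast
      qed
      obtain n :: nat where n: "4 * C * \<nu> / \<theta> < real n" using reals_Archimedean2 by blast
      have n0': "0 < n" using n C \<nu>0 \<theta>0
        by (metis divide_nonneg_pos mult_nonneg_nonneg not_gr_zero of_nat_0 order.strict_iff_not zero_le_numeral leD)
      have nb: "4 * C / real n * \<nu> \<le> \<theta>"
      proof -
        have "4 * C * \<nu> < real n * \<theta>" using n \<theta>0 by (simp add: divide_less_eq mult.commute)
        then show ?thesis using n0' by (simp add: divide_le_eq mult.commute)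
      qed
      obtain z where zS: "z \<in> Lip0 m0" and zN: "lipnorm z \<le> 1"
        and phiz: "(1-\<theta>) * \<phi> g - 4 * C / real n \<le> \<phi> z"
        and pr: "\<exists>u v. u \<noteq> v \<and> z u - z v = ((1-\<theta>) / lipnorm y) *\<^sub>R (y u - y v) \<and>
                  (1-\<theta>) * lipnorm y * dist u v \<le> dist (y u) (y v)"
        using key[OF LS ex add hom bnd C yS \<nu>pos[unfolded \<nu>_def] gS gN \<theta>0 \<theta>1 \<theta>0 \<theta>1 n0'] by blast
      then obtain u v where uv: "u \<noteq> v" "z u - z v = ((1-\<theta>) / \<nu>) *\<^sub>R (y u - y v)"
        "(1-\<theta>) * \<nu> * dist u v \<le> dist (y u) (y v)" unfolding \<nu>_def by blast
      have duv: "0 < dist u v" using uv by simp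
      define c where "c = (1-\<theta>) / \<nu> + \<phi> z"
      define w where "w = (\<lambda>t. z t + \<phi> z *\<^sub>R y t)"
      have wS: "w \<in> Lip0 m0" unfolding w_def by (rule Lip0_add[OF zS Lip0_scale[OF yS]])
      have wd: "w u - w v = c *\<^sub>R (y u - y v)"
      proof -
        have "w u - w v = (z u - z v) + \<phi> z *\<^sub>R (y u - y v)" unfolding w_def by (simp add: algebra_simps)
        also have "\<dots> = c *\<^sub>R (y u - y v)" unfolding c_def uv(2) by (simp add: scaleR_left_distrib)
        finally show ?thesis .
      qed
      have cnu: "c * \<nu> = (1-\<theta>) + \<phi> z * \<nu>" unfolding c_def using \<nu>pos by (simp add: field_simps)
      have pzlow: "(1-\<theta>) * (\<phi> g * \<nu>) - \<theta> \<le> \<phi> z * \<nu>"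
      proof -
        have "((1-\<theta>) * \<phi> g - 4 * C / real n) * \<nu> \<le> \<phi> z * \<nu>" using phiz \<nu>0 by (rule mult_right_mono)
        then show ?thesis using nb by (simp add: algebra_simps)
      qed
      have pg0: "0 \<le> \<phi> g" using gphi by simp
      have cnu_low: "(1-\<theta>) * (T - \<theta>) - \<theta> \<le> c * \<nu>"
      proof -
        have "(1-\<theta>) * (Sup B - \<theta>) \<le> (1-\<theta>) * (\<phi> g * \<nu>)"
          using f0(3) gphi \<theta>1 by (intro mult_left_mono) auto
        then show ?thesis using cnu pzlow unfolding T_def by (simp add: algebra_simps)
      qed
      have c0: "0 \<le> c * \<nu>"
      proof -
        have "0 \<le> (1-\<theta>) * (\<phi> g * \<nu>)" using pg0 \<nu>0 \<theta>1 by simp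
        then show ?thesis using cnu pzlow \<theta>h by linarith
      qed
      then have c0': "0 \<le> c" using \<nu>pos by (simp add: zero_le_mult_iff)
      have "c * \<nu> * (1-\<theta>) * dist u v = c * ((1-\<theta>) * \<nu> * dist u v)" by (simp add: algebra_simps)
      also have "\<dots> \<le> c * dist (y u) (y v)" using uv(3) c0' by (rule mult_left_mono)
      also have "\<dots> = dist (w u) (w v)" using wd c0' by (simp add: dist_norm)
      also have "\<dots> \<le> lipnorm w * dist u v" by (rule lipnorm_bound[OF lipS[OF wS]])
      finally have aw: "c * \<nu> * (1-\<theta>) \<le> lipnorm w" using duv by simp
      have "T - e \<le> T - \<theta>*(2*T+2)" using \<theta>e by simp
      also have "\<dots> \<le> ((1-\<theta>)*(T-\<theta>) - \<theta>)*(1-\<theta>)" by (rule arith1) (use \<theta>0 \<theta>h T1 in auto)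
      also have "\<dots> \<le> c * \<nu> * (1-\<theta>)" using cnu_low \<theta>1 by (intro mult_right_mono) auto
      also note aw
      finally have "T - e \<le> lipnorm w" .
      moreover have "lipnorm w \<in> A" unfolding A_def w_def using zS zN by force
      ultimately show ?thesis by blast
    qed
    then obtain a where "a \<in> A" "T - e \<le> a" by blast
    moreover have "a \<le> Sup A" using \<open>a \<in> A\<close> Abdd by (rule cSup_upper)
    ultimately show "1 + Sup B \<le> Sup A + e" unfolding T_def by linarith
  qed
  show "Sup A = 1 + Sup B" using up low by simp
qed


end
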